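(* Let $\Bbbk$ be a field, $n\ge2$, $q\in\Bbbk$ a primitive $n$-th root of unity, $T_n(q)$ the Taft algebra and $A$ a unital associative $\Bbbk$-algebra. Let $\cdot:\Bbbk C_n\otimes A\to A$ be a partial action of $\Bbbk C_n$ on $A$ with $g\cdot1_A=0$. Then for each $w\in A$ such that $w^n\in Z(A)$ and $g^i\cdot w=q^{-i}(g^i\cdot1_A)w$ for all $0\le i\le n-1$, the linear map $\cdot:T_n(q)\otimes A\to A$ defined by $$g^ix^j\cdot a=q^{-ij}\sum_{k=0}^{j}(-1)^kq^{-\frac{k(k-1)}{2}}\binom{j}{k}_{q^{-1}}w^{j-k}(g^{i+k}\cdot a)w^k\qquad(0\le i,j\le n-1,\ a\in A)$$ is a partial action of $T_n(q)$ on $A$.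
   Context: The Taft algebra $T_n(q)$ is the Hopf algebra generated by $g,x$ with relations $g^n=1$, $x^n=0$, $xg=qgx$, basis $\{g^ix^j:0\le i,j<n\}$, $g$ group-like, $\Delta(x)=x\otimes1+g\otimes x$, $\varepsilon(x)=0$. $\Bbbk C_n=\mathrm{span}\{1,g,\dots,g^{n-1}\}\subseteq T_n(q)$ is the group algebra of the cyclic group $C_n=\langle g\rangle$; exponents of $g$ are read modulo $n$. $Z(A)$ is the center of $A$. A partial action of a bialgebra $H$ on $A$ is a linear map $\cdot:H\otimes A\to A$ with $1_H\cdot a=a$, $h\cdot(ab)=(h_1\cdot a)(h_2\cdot b)$, $h\cdot(k\cdot a)=(h_1\cdot1_A)(h_2k\cdot a)$. $q$-binomials: $\binom{0}{0}_p=1$, $\binom{N}{m}_p=0$ if $m>N$ or $m<0$, and $\binom{N}{m}_p=\binom{N-1}{m-1}_p+p^m\binom{N-1}{m}_p$ for $N\ge1$, $0\le m\le N$. *)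

theory Defs
  imports Main
begin

definition kalgebra :: "('k::field \<Rightarrow> 'a::ring_1 \<Rightarrow> 'a) \<Rightarrow> bool" where
  "kalgebra sm \<longleftrightarrow>
     (\<forall>s t a. sm (s + t) a = sm s a + sm t a) \<and>
     (\<forall>s a b. sm s (a + b) = sm s a + sm s b) \<and>
     (\<forall>s t a. sm (s * t) a = sm s (sm t a)) \<and>
     (\<forall>a. sm 1 a = a) \<and>
     (\<forall>s a b. sm s (a * b) = sm s a * b) \<and>
     (\<forall>s a b. sm s (a * b) = a * sm s b)"

text \<open>Partial action of a bialgebra H with finite basis B, given by structure constants:
  mult b1 b2 e = coefficient of e in b1*b2; unit e = coefficient of e in 1_H;
  comult b b1 b2 = coefficient of b1 \<otimes> b2 in \<Delta>(b).
  The linear map H \<otimes> A \<rightarrow> A is determined by act b (the action of basis element b),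
  each act b being linear. By linearity the axioms need only be checked on basis elements.\<close>
definition partial_action ::
  "'b set \<Rightarrow> ('b \<Rightarrow> 'b \<Rightarrow> 'b \<Rightarrow> 'k::field) \<Rightarrow> ('b \<Rightarrow> 'k) \<Rightarrow> ('b \<Rightarrow> 'b \<Rightarrow> 'b \<Rightarrow> 'k)
    \<Rightarrow> ('k \<Rightarrow> 'a::ring_1 \<Rightarrow> 'a) \<Rightarrow> ('b \<Rightarrow> 'a \<Rightarrow> 'a) \<Rightarrow> bool" where
  "partial_action B mult unit comult sm act \<longleftrightarrow>
     (\<forall>b\<in>B. \<forall>a c. act b (a + c) = act b a + act b c) \<and>
     (\<forall>b\<in>B. \<forall>t a. act b (sm t a) = sm t (act b a)) \<and>
     (\<forall>a. (\<Sum>e\<in>B. sm (unit e) (act e a)) = a) \<and>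
     (\<forall>b\<in>B. \<forall>a c. act b (a * c) =
        (\<Sum>b1\<in>B. \<Sum>b2\<in>B. sm (comult b b1 b2) (act b1 a * act b2 c))) \<and>
     (\<forall>b\<in>B. \<forall>k\<in>B. \<forall>a. act b (act k a) =
        (\<Sum>b1\<in>B. \<Sum>b2\<in>B. sm (comult b b1 b2)
            (act b1 1 * (\<Sum>e\<in>B. sm (mult b2 k e) (act e a)))))"

text \<open>The group algebra k C_n, basis g^m (m < n).\<close>
definition cyc_basis :: "nat \<Rightarrow> nat set" where "cyc_basis n = {..<n}"
definition cyc_mult :: "nat \<Rightarrow> nat \<Rightarrow> nat \<Rightarrow> nat \<Rightarrow> 'k::field" where
  "cyc_mult n m l e = (if e = (m + l) mod n then 1 else 0)"
definition cyc_unit :: "nat \<Rightarrow> 'k::field" where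
  "cyc_unit e = (if e = 0 then 1 else 0)"
definition cyc_comult :: "nat \<Rightarrow> nat \<Rightarrow> nat \<Rightarrow> 'k::field" where
  "cyc_comult m b1 b2 = (if b1 = m \<and> b2 = m then 1 else 0)"

text \<open>The Taft algebra T_n(q), basis g^i x^j (i,j < n), encoded as the pair (i,j).
  Multiplication: (g^i x^j)(g^k x^l) = q^(jk) g^(i+k) x^(j+l) (zero if j+l \<ge> n),
  which follows from x g = q g x, g^n = 1, x^n = 0.\<close>
definition taft_basis :: "nat \<Rightarrow> (nat \<times> nat) set" where
  "taft_basis n = {..<n} \<times> {..<n}"
definition taft_mult :: "nat \<Rightarrow> 'k::field \<Rightarrow> nat \<times> nat \<Rightarrow> nat \<times> nat \<Rightarrow> nat \<times> nat \<Rightarrow> 'k" where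
  "taft_mult n q b c e =
     (if e = ((fst b + fst c) mod n, snd b + snd c) then q ^ (snd b * fst c) else 0)"
definition taft_unit :: "nat \<times> nat \<Rightarrow> 'k::field" where
  "taft_unit e = (if e = (0, 0) then 1 else 0)"

text \<open>Comultiplication: \<Delta>(g^i) = g^i \<otimes> g^i, \<Delta>(x) = x \<otimes> 1 + g \<otimes> x, and
  \<Delta>(g^i x^(j+1)) = \<Delta>(g^i x^j) \<Delta>(x) (\<Delta> is an algebra map), the product being taken
  in T_n(q) \<otimes> T_n(q). taft_comult_aux n q i j e1 e2 = coefficient of e1 \<otimes> e2 in \<Delta>(g^i x^j).\<close>
fun taft_comult_aux :: "nat \<Rightarrow> 'k::field \<Rightarrow> nat \<Rightarrow> nat \<Rightarrow> nat \<times> nat \<Rightarrow> nat \<times> nat \<Rightarrow> 'k" where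
  "taft_comult_aux n q i 0 e1 e2 =
     (if e1 = (i mod n, 0) \<and> e2 = (i mod n, 0) then 1 else 0)"
| "taft_comult_aux n q i (Suc j) e1 e2 =
     (\<Sum>b1\<in>taft_basis n. \<Sum>b2\<in>taft_basis n. taft_comult_aux n q i j b1 b2 *
        (taft_mult n q b1 (0, 1) e1 * taft_mult n q b2 (0, 0) e2
         + taft_mult n q b1 (1 mod n, 0) e1 * taft_mult n q b2 (0, 1) e2))"

definition taft_comult :: "nat \<Rightarrow> 'k::field \<Rightarrow> nat \<times> nat \<Rightarrow> nat \<times> nat \<Rightarrow> nat \<times> nat \<Rightarrow> 'k" where
  "taft_comult n q b e1 e2 = taft_comult_aux n q (fst b) (snd b) e1 e2"

fun qbinom :: "'k::field \<Rightarrow> nat \<Rightarrow> nat \<Rightarrow> 'k" where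
  "qbinom p 0 m = (if m = 0 then 1 else 0)"
| "qbinom p (Suc N) 0 = qbinom p N 0"
| "qbinom p (Suc N) (Suc m) = qbinom p N m + p ^ Suc m * qbinom p N (Suc m)"

definition primitive_root :: "nat \<Rightarrow> 'k::field \<Rightarrow> bool" where
  "primitive_root n q \<longleftrightarrow> q ^ n = 1 \<and> (\<forall>m. 0 < m \<and> m < n \<longrightarrow> q ^ m \<noteq> 1)"

definition taft_act :: "nat \<Rightarrow> 'k::field \<Rightarrow> ('k \<Rightarrow> 'a::ring_1 \<Rightarrow> 'a) \<Rightarrow> (nat \<Rightarrow> 'a \<Rightarrow> 'a)
    \<Rightarrow> 'a \<Rightarrow> nat \<times> nat \<Rightarrow> 'a \<Rightarrow> 'a" where
  "taft_act n q sm G w b a =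
     sm (inverse q ^ (fst b * snd b))
       (\<Sum>k = 0..snd b. sm ((-1) ^ k * inverse q ^ (k * (k - 1) div 2) * qbinom (inverse q) (snd b) k)
          (w ^ (snd b - k) * G ((fst b + k) mod n) a * w ^ k))"

end

theory Submission
  imports Defs
begin


lemma qbinom_0: "qbinom p N 0 = 1"
  by (induction N) auto

lemma qbinom_gt: "N < m \<Longrightarrow> qbinom p N m = 0"
proof (induction N arbitrary: m)
  case 0 then show ?case by simp
next
  case (Suc N)
  then obtain m' where "m = Suc m'" by (cases m) auto
  with Suc show ?case by simp
qed

lemma qbinom_diag: "qbinom p N N = 1"
  by (induction N) (auto simp: qbinom_gt)

lemma qbinom_pascal2:
  "qbinom p (Suc N) (Suc m) = p ^ (N - m) * qbinom p N m + qbinom p N (Suc m)"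
proof (induction N arbitrary: m)
  case 0 then show ?case by simp
next
  case (Suc N)
  show ?case
  proof (cases m)
    case 0
    have "qbinom p (Suc N) 1 = p ^ N + qbinom p N 1"
      using Suc.IH[of 0] by (simp add: qbinom_0)
    then show ?thesis using 0 by (simp add: qbinom_0 algebra_simps)
  next
    case (Suc m')
    have IH1: "qbinom p (Suc N) (Suc m') = p ^ (N - m') * qbinom p N m' + qbinom p N (Suc m')"
      using Suc.IH by blast
    have IH2: "qbinom p (Suc N) (Suc (Suc m')) = p ^ (N - Suc m') * qbinom p N (Suc m') + qbinom p N (Suc (Suc m'))"
      using Suc.IH by blast
    have key: "p ^ (Suc N - Suc m') * (p ^ Suc m' * qbinom p N (Suc m')) =
        p ^ Suc (Suc m') * (p ^ (N - Suc m') * qbinom p N (Suc m'))"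
    proof (cases "Suc m' \<le> N")
      case True
      then have "Suc N - Suc m' + Suc m' = Suc (Suc m') + (N - Suc m')" by arith
      then have "p ^ (Suc N - Suc m') * p ^ Suc m' = p ^ Suc (Suc m') * p ^ (N - Suc m')"
        by (metis power_add)
      then show ?thesis by (metis mult.assoc)
    next
      case False
      then show ?thesis by (simp add: qbinom_gt)
    qed
    have L: "qbinom p (Suc (Suc N)) (Suc (Suc m')) = (p ^ (N - m') * qbinom p N m' + qbinom p N (Suc m'))
         + p ^ Suc (Suc m') * (p ^ (N - Suc m') * qbinom p N (Suc m') + qbinom p N (Suc (Suc m')))"
      by (subst qbinom.simps(3)) (simp only: IH1 IH2)
    have R: "p ^ (Suc N - Suc m') * qbinom p (Suc N) (Suc m') + qbinom p (Suc N) (Suc (Suc m'))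
       = p ^ (Suc N - Suc m') * (qbinom p N m' + p ^ Suc m' * qbinom p N (Suc m')) + (qbinom p N (Suc m') + p ^ Suc (Suc m') * qbinom p N (Suc (Suc m')))"
      by (simp only: qbinom.simps(3))
    have "p ^ (Suc N - Suc m') = p ^ (N - m')" by simp
    then show ?thesis unfolding Suc L R using key by (simp add: algebra_simps) metis
  qed
qed

lemma aux_field: "(X::'k::field) = Y + s * Z \<Longrightarrow> s * X = t * Y + s * Z \<Longrightarrow> (1 - s) * X = (1 - t) * Y"
  by (simp add: algebra_simps)

lemma qbinom_rel:
  "(1 - p ^ Suc m) * qbinom p (Suc N) (Suc m) = (1 - p ^ Suc N) * qbinom p N m"
proof (cases "m \<le> N")
  case True
  have a: "qbinom p (Suc N) (Suc m) = qbinom p N m + p ^ Suc m * qbinom p N (Suc m)" by simp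
  have b: "qbinom p (Suc N) (Suc m) = p ^ (N - m) * qbinom p N m + qbinom p N (Suc m)"
    by (rule qbinom_pascal2)
  have c: "p ^ Suc m * p ^ (N - m) = p ^ Suc N"
  proof -
    have "Suc m + (N - m) = Suc N" using True by arith
    then show ?thesis by (metis power_add)
  qed
  have "p ^ Suc m * qbinom p (Suc N) (Suc m) = p ^ Suc N * qbinom p N m + p ^ Suc m * qbinom p N (Suc m)"
  proof -
    have "p ^ Suc m * qbinom p (Suc N) (Suc m) = (p ^ Suc m * p ^ (N - m)) * qbinom p N m + p ^ Suc m * qbinom p N (Suc m)"
      using b by (simp add: algebra_simps)
    then show ?thesis by (simp only: c)
  qed
  then show ?thesis using a aux_field by blast
next
  case False
  then show ?thesis by (simp add: qbinom_gt)
qed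




lemma split_sum:
  fixes t g h :: "nat \<Rightarrow> 'b::comm_monoid_add"
  assumes "t 0 = g 0" "\<And>k. k \<le> j \<Longrightarrow> t (Suc k) = g (Suc k) + h k" "g (Suc j) = 0"
  shows "(\<Sum>k\<le>Suc j. t k) = (\<Sum>k\<le>j. g k + h k)"
proof -
  have "(\<Sum>k\<le>Suc j. t k) = t 0 + (\<Sum>k\<le>j. t (Suc k))" by (rule sum.atMost_Suc_shift)
  also have "\<dots> = g 0 + (\<Sum>k\<le>j. g (Suc k) + h k)" using assms by simp
  also have "\<dots> = (g 0 + (\<Sum>k\<le>j. g (Suc k))) + (\<Sum>k\<le>j. h k)"
    by (simp add: sum.distrib add.assoc)
  also have "g 0 + (\<Sum>k\<le>j. g (Suc k)) = (\<Sum>k\<le>Suc j. g k)" by (rule sum.atMost_Suc_shift[symmetric])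
  also have "\<dots> = (\<Sum>k\<le>j. g k)" using assms by simp
  finally show ?thesis by (simp add: sum.distrib)
qed

lemma sum2_delta:
  assumes "finite A" "finite B" "x \<in> A" "y \<in> B"
  shows "(\<Sum>a\<in>A. \<Sum>b\<in>B. if a = x \<and> b = y then f a b else 0) = f x y"
proof -
  have "\<And>a. (\<Sum>b\<in>B. if a = x \<and> b = y then f a b else 0) = (if a = x then f a y else 0)"
  proof -
    fix a
    have "(\<Sum>b\<in>B. if a = x \<and> b = y then f a b else 0) = (\<Sum>b\<in>B. if b = y then (if a = x then f a b else 0) else 0)"
      by (rule sum.cong) auto
    also have "\<dots> = (if a = x then f a y else 0)" using assms by (simp add: sum.delta')
    finally show "?thesis a" .
  qed
  then show ?thesis using assms by (simp add: sum.delta')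
qed

locale tctx =
  fixes n :: nat and q :: "'k::field" and sm :: "'k \<Rightarrow> 'a::ring_1 \<Rightarrow> 'a"
    and G :: "nat \<Rightarrow> 'a \<Rightarrow> 'a" and w :: 'a
  assumes n2: "n \<ge> 2"
    and prim: "primitive_root n q"
    and alg: "kalgebra sm"
    and pa: "partial_action (cyc_basis n) (cyc_mult n) cyc_unit cyc_comult sm G"
    and wc: "\<forall>a. w ^ n * a = a * w ^ n"
    and wG: "\<forall>i < n. G i w = sm (inverse q ^ i) (G i 1 * w)"
begin

abbreviation p where "p \<equiv> inverse q"

lemma kal: "\<And>s t a. sm (s + t) a = sm s a + sm t a" "\<And>s a b. sm s (a + b) = sm s a + sm s b"
  "\<And>s t a. sm (s * t) a = sm s (sm t a)" "\<And>a. sm 1 a = a"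
  "\<And>s a b. sm s (a * b) = sm s a * b" "\<And>s a b. sm s (a * b) = a * sm s b"
  using alg unfolding kalgebra_def by auto
lemma sm_addl: "sm (s + t) a = sm s a + sm t a" by (rule kal(1))
lemma sm_addr: "sm s (a + b) = sm s a + sm s b" by (rule kal(2))
lemma sm_sm: "sm s (sm t a) = sm (s * t) a" by (rule kal(3)[symmetric])
lemma sm_1[simp]: "sm 1 a = a" by (rule kal(4))
lemma sm_ml: "sm s a * b = sm s (a * b)" by (rule kal(5)[symmetric])
lemma sm_mr: "a * sm s b = sm s (a * b)" by (rule kal(6)[symmetric])
lemma sm_0l[simp]: "sm 0 a = 0"
proof -
  have "sm 0 a = sm 0 a + sm 0 a" using sm_addl[of 0 0 a] by simp
  then show ?thesis by (metis add_cancel_right_right)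
qed
lemma sm_0r[simp]: "sm s 0 = 0"
proof -
  have "sm s 0 = sm s 0 + sm s 0" using sm_addr[of s 0 0] by simp
  then show ?thesis by (metis add_cancel_right_right)
qed
lemma sm_neg_r: "sm s (- a) = - sm s a"
proof -
  have "sm s (- a) + sm s a = 0" using sm_addr[of s "-a" a] by simp
  then show ?thesis by (simp add: eq_neg_iff_add_eq_0)
qed
lemma sm_diff_r: "sm s (a - b) = sm s a - sm s b"
  using sm_addr[of s a "-b"] sm_neg_r by simp
lemma sm_neg_l: "sm (- s) a = - sm s a"
proof -
  have "sm (- s) a + sm s a = 0" using sm_addl[of "-s" s a] by simp
  then show ?thesis by (simp add: eq_neg_iff_add_eq_0)
qed
lemma sm_diff_l: "sm (s - t) a = sm s a - sm t a"
  using sm_addl[of s "-t" a] sm_neg_l by simp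
lemma sm_comm: "sm s (sm t a) = sm t (sm s a)"
  by (simp add: sm_sm mult.commute)
lemma sm_sum_r: "sm s (sum f A) = (\<Sum>x\<in>A. sm s (f x))"
  by (induct A rule: infinite_finite_induct) (auto simp: sm_addr)
lemma sm_sum_l: "sm (sum f A) a = (\<Sum>x\<in>A. sm (f x) a)"
  by (induct A rule: infinite_finite_induct) (auto simp: sm_addl)
lemma sm_if: "sm (if P then s else t) a = (if P then sm s a else sm t a)"
  by simp

lemmas smn = sm_ml sm_mr sm_sm sm_diff_r sm_neg_r sm_addr

lemma n_pos: "0 < n" using n2 by simp
lemma one_mod: "1 mod n = 1" using n2 by simp
lemma qn: "q ^ n = 1" using prim unfolding primitive_root_def by blast
lemma q_nz: "q \<noteq> 0"
proof
  assume "q = 0"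
  then have "q ^ n = 0" using n_pos by simp
  then show False using qn by simp
qed
lemma pn: "p ^ n = 1" using qn by (simp add: power_inverse)
lemma pq: "p * q = 1" using q_nz by simp
lemma qp: "q * p = 1" using q_nz by simp
lemma p_mod: "p ^ (i mod n) = p ^ i"
proof -
  have "p ^ i = p ^ (n * (i div n) + i mod n)" by simp
  also have "\<dots> = (p ^ n) ^ (i div n) * p ^ (i mod n)" by (simp only: power_add power_mult)
  finally show ?thesis using pn by simp
qed

lemma sm_if01[simp]: "sm (if P then 1 else 0) a = (if P then a else 0)"
  by simp

lemma pa_facts:
  "\<forall>b\<in>{..<n}. \<forall>a c. G b (a + c) = G b a + G b c"
  "\<forall>b\<in>{..<n}. \<forall>t a. G b (sm t a) = sm t (G b a)"
  "\<forall>a. (\<Sum>e<n. sm (cyc_unit e) (G e a)) = a"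
  "\<forall>b\<in>{..<n}. \<forall>a c. G b (a * c) = (\<Sum>b1<n. \<Sum>b2<n. sm (cyc_comult b b1 b2) (G b1 a * G b2 c))"
  "\<forall>b\<in>{..<n}. \<forall>k\<in>{..<n}. \<forall>a. G b (G k a) = (\<Sum>b1<n. \<Sum>b2<n. sm (cyc_comult b b1 b2)
            (G b1 1 * (\<Sum>e<n. sm (cyc_mult n b2 k e) (G e a))))"
  using pa unfolding partial_action_def cyc_basis_def by blast+

lemma G_add: "i < n \<Longrightarrow> G i (a + c) = G i a + G i c"
  using pa_facts(1) by blast
lemma G_sm: "i < n \<Longrightarrow> G i (sm t a) = sm t (G i a)"
  using pa_facts(2) by blast
lemma G_mul: "i < n \<Longrightarrow> G i (a * c) = G i a * G i c"
proof -
  assume i: "i < n"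
  then have "G i (a * c) = (\<Sum>b1<n. \<Sum>b2<n. sm (cyc_comult i b1 b2) (G b1 a * G b2 c))"
    using pa_facts(4) by blast
  also have "\<dots> = (\<Sum>b1<n. \<Sum>b2<n. if b1 = i \<and> b2 = i then G b1 a * G b2 c else 0)"
    unfolding cyc_comult_def by simp
  also have "\<dots> = G i a * G i c" using i by (simp add: sum2_delta)
  finally show ?thesis .
qed

lemma G0: "G 0 a = a"
proof -
  have "(\<Sum>e\<in>{..<n}. sm (cyc_unit e) (G e a)) = a"
    using pa_facts(3) by blast
  then show ?thesis using n_pos by (simp add: cyc_unit_def sum.delta')
qed

lemma G_comp:
  assumes "i < n" "k < n"
  shows "G i (G k a) = G i 1 * G ((i + k) mod n) a"
proof -
  have "G i (G k a) = (\<Sum>b1\<in>{..<n}. \<Sum>b2\<in>{..<n}. sm (cyc_comult i b1 b2)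
            (G b1 1 * (\<Sum>e\<in>{..<n}. sm (cyc_mult n b2 k e) (G e a))))"
    using pa_facts(5) assms by blast
  also have "\<dots> = G i 1 * (\<Sum>e\<in>{..<n}. sm (cyc_mult n i k e) (G e a))"
    using assms unfolding cyc_comult_def by (simp add: sum2_delta)
  also have "(\<Sum>e\<in>{..<n}. sm (cyc_mult n i k e) (G e a)) = G ((i + k) mod n) a"
    using n_pos unfolding cyc_mult_def by (simp add: sum.delta')
  finally show ?thesis .
qed

end



lemma tri_exp: "Suc k * k div 2 = k * (k - 1) div 2 + k"
proof (cases k)
  case 0 then show ?thesis by simp
next
  case (Suc m)
  have "Suc k * k = k * (k - 1) + 2 * k" using Suc by (simp add: algebra_simps)
  then show ?thesis by simp
qed

context tctx begin

definition X where "X i j a = taft_act n q sm G w (i, j) a"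
definition cf where "cf j k = (-1) ^ k * p ^ (k * (k - 1) div 2) * qbinom p j k"
definition Y where "Y i j a = (\<Sum>k\<le>j. sm (cf j k) (w ^ (j - k) * G ((i + k) mod n) a * w ^ k))"

lemma X_Y: "X i j a = sm (p ^ (i * j)) (Y i j a)"
  by (simp add: X_def Y_def cf_def taft_act_def atLeast0AtMost)

lemma cf_0: "cf j 0 = 1" by (simp add: cf_def qbinom_0)
lemma cf_gt: "j < k \<Longrightarrow> cf j k = 0" by (simp add: cf_def qbinom_gt)

lemma cf_Suc:
  assumes "k \<le> j"
  shows "cf (Suc j) (Suc k) = cf j (Suc k) + (- (p ^ j)) * cf j k"
proof -
  have e: "Suc k * k div 2 + (j - k) = j + k * (k - 1) div 2"
    using assms tri_exp[of k] by simp
  have "p ^ (Suc k * k div 2) * p ^ (j - k) = p ^ j * p ^ (k * (k - 1) div 2)"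
    by (metis e power_add)
  then show ?thesis unfolding cf_def using qbinom_pascal2[of p j k]
    by (simp add: algebra_simps)
qed

lemma Y_rec: "Y i (Suc j) a = w * Y i j a - sm (p ^ j) (Y (Suc i) j a * w)"
proof -
  define T where "T N k i' = w ^ (N - k) * G ((i' + k) mod n) a * w ^ k" for N k i'
  define t where "t k = sm (cf (Suc j) k) (T (Suc j) k i)" for k
  define g where "g k = w * sm (cf j k) (T j k i)" for k
  define h where "h k = - sm (p ^ j) (sm (cf j k) (T j k (Suc i)) * w)" for k
  have YT: "Y i' N a = (\<Sum>k\<le>N. sm (cf N k) (T N k i'))" for i' N
    unfolding Y_def T_def by simp
  have s: "(\<Sum>k\<le>Suc j. t k) = (\<Sum>k\<le>j. g k + h k)"
  proof (rule split_sum)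
    show "t 0 = g 0" unfolding t_def g_def T_def by (simp add: cf_0 mult.assoc)
    show "g (Suc j) = 0" unfolding g_def by (simp add: cf_gt)
    fix k assume k: "k \<le> j"
    have T1: "T (Suc j) (Suc k) i = T j k (Suc i) * w"
      unfolding T_def by (simp add: power_commutes mult.assoc)
    have T2: "sm (cf j (Suc k)) (T (Suc j) (Suc k) i) = w * sm (cf j (Suc k)) (T j (Suc k) i)"
    proof (cases "Suc k \<le> j")
      case True
      then have "Suc j - Suc k = Suc (j - Suc k)" by simp
      then show ?thesis unfolding T_def by (simp add: sm_mr mult.assoc)
    next
      case False
      then show ?thesis by (simp add: cf_gt)
    qed
    have c: "cf (Suc j) (Suc k) = cf j (Suc k) - p ^ j * cf j k" using cf_Suc k by simp
    have "t (Suc k) = sm (cf j (Suc k)) (T (Suc j) (Suc k) i) - sm (p ^ j * cf j k) (T (Suc j) (Suc k) i)"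
      unfolding t_def c by (rule sm_diff_l)
    then show "t (Suc k) = g (Suc k) + h k"
      unfolding g_def h_def using T1 T2 by (simp add: sm_sm sm_ml)
  qed
  have "Y i (Suc j) a = (\<Sum>k\<le>j. g k + h k)" using s YT t_def by simp
  also have "\<dots> = w * Y i j a - sm (p ^ j) (Y (Suc i) j a * w)"
    unfolding YT g_def h_def
    by (simp add: sum.distrib sum_distrib_left sum_distrib_right sm_sum_r sum_negf sum_subtractf)
  finally show ?thesis .
qed

lemma X_rec: "X i (Suc j) a = sm (p ^ i) (w * X i j a - X (Suc i) j a * w)"
proof -
  have e1: "p ^ (i * Suc j) = p ^ i * p ^ (i * j)" by (simp add: power_add)
  have e2: "p ^ (i * Suc j) * p ^ j = p ^ i * p ^ (Suc i * j)" by (simp add: power_add algebra_simps)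
  show ?thesis unfolding X_Y Y_rec
    by (simp add: sm_diff_r sm_ml sm_mr sm_sm power_add mult_ac)
qed

lemma X0: "X i 0 a = G (i mod n) a"
  unfolding X_Y Y_def by (simp add: cf_0)

lemma X_mod: "X (i mod n) j a = X i j a"
proof -
  have "p ^ ((i mod n) * j) = p ^ (i * j)"
    by (metis p_mod power_mult)
  moreover have "Y (i mod n) j a = Y i j a"
    unfolding Y_def by (simp add: mod_add_left_eq)
  ultimately show ?thesis unfolding X_Y by simp
qed

end



context tctx begin

lemma X_add: "X i j (a + c) = X i j a + X i j c"
proof (induction j arbitrary: i)
  case 0 show ?case by (simp add: X0 G_add n_pos)
next
  case (Suc j)
  have "w * (X i j a + X i j c) - (X (Suc i) j a + X (Suc i) j c) * w
      = (w * X i j a - X (Suc i) j a * w) + (w * X i j c - X (Suc i) j c * w)"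
    by (simp add: algebra_simps)
  then show ?case by (simp add: X_rec Suc.IH sm_addr)
qed

lemma X_sm: "X i j (sm t a) = sm t (X i j a)"
proof (induction j arbitrary: i)
  case 0 show ?case by (simp add: X0 G_sm n_pos)
next
  case (Suc j)
  then show ?case by (simp add: X_rec sm_mr sm_ml sm_diff_r sm_sm mult.commute)
qed

lemma G_zero: "i < n \<Longrightarrow> G i 0 = 0"
  using G_add[of i 0 0] by simp

lemma G_neg: "i < n \<Longrightarrow> G i (- x) = - G i x"
  using G_add[of i "-x" x] G_zero by (simp add: eq_neg_iff_add_eq_0)

lemma G_diff: "i < n \<Longrightarrow> G i (x - y) = G i x - G i y"
  using G_add[of i x "-y"] G_neg by simp

lemma p_prim: "0 < m \<Longrightarrow> m < n \<Longrightarrow> p ^ m \<noteq> 1"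
  using prim unfolding primitive_root_def by (simp add: power_inverse)

lemma qb_root: "0 < k \<Longrightarrow> k < n \<Longrightarrow> qbinom p n k = 0"
proof -
  assume k: "0 < k" "k < n"
  obtain N where N: "n = Suc N" using n_pos by (cases n) auto
  obtain m where m: "k = Suc m" using k by (cases k) auto
  have "(1 - p ^ Suc m) * qbinom p (Suc N) (Suc m) = (1 - p ^ Suc N) * qbinom p N m"
    by (rule qbinom_rel)
  then have "(1 - p ^ k) * qbinom p n k = 0" using N m pn by simp
  moreover have "1 - p ^ k \<noteq> 0" using p_prim k by simp
  ultimately show ?thesis by simp
qed

lemma sign: "(-1) ^ n * p ^ (n * (n - 1) div 2) = (-1 :: 'k)"
proof (cases "even n")
  case False
  then have "even (n - 1)" by simp
  then have "n * (n - 1) div 2 = n * ((n - 1) div 2)" by (metis div_mult_swap dvd_mult)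
  then have "p ^ (n * (n - 1) div 2) = 1" using pn by (simp add: power_mult)
  then show ?thesis using False by simp
next
  case True
  then obtain m where m: "n = 2 * m" by blast
  then have m0: "0 < m" "m < n" using n2 by auto
  have "(p ^ m) ^ 2 = 1" using pn m by (simp add: power_mult[symmetric] mult.commute)
  then have "p ^ m = 1 \<or> p ^ m = -1" by (simp add: power2_eq_1_iff)
  then have pm: "p ^ m = -1" using p_prim m0 by blast
  have "n * (n - 1) div 2 = m * (n - 1)" using m by simp
  then have "p ^ (n * (n - 1) div 2) = (-1) ^ (n - 1)" using pm by (simp add: power_mult)
  moreover have "odd (n - 1)" using True n2 by simp
  ultimately show ?thesis using True by simp
qed

lemma X_n: "X i n a = 0"
proof -
  define f where "f k = sm (cf n k) (w ^ (n - k) * G ((i + k) mod n) a * w ^ k)" for k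
  have "Y i n a = (\<Sum>k\<le>n. f k)" unfolding Y_def f_def by simp
  also have "\<dots> = (\<Sum>k\<in>{0, n}. f k)"
  proof (rule sum.mono_neutral_right)
    show "finite {..n}" by simp
    show "{0, n} \<subseteq> {..n}" by auto
    show "\<forall>k\<in>{..n} - {0, n}. f k = 0"
      by (auto simp: f_def cf_def qb_root)
  qed
  also have "\<dots> = f 0 + f n" using n_pos by simp
  also have "\<dots> = w ^ n * G (i mod n) a - G (i mod n) a * w ^ n"
  proof -
    have "cf n n = -1" unfolding cf_def using sign by (simp add: qbinom_diag)
    then show ?thesis unfolding f_def by (simp add: cf_0 sm_neg_l)
  qed
  also have "\<dots> = 0" using wc by simp
  finally show ?thesis unfolding X_Y by simp
qed

lemma X_big: "n \<le> j \<Longrightarrow> X i j a = 0"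
proof -
  assume "n \<le> j"
  then obtain d where d: "j = n + d" using le_Suc_ex by blast
  have "X i (n + d) a = 0" for i
  proof (induction d arbitrary: i)
    case 0 then show ?case using X_n by simp
  next
    case (Suc d) then show ?case by (simp add: X_rec)
  qed
  then show ?thesis using d by simp
qed

end



context tctx begin

lemma G_X: "G (i mod n) (X l m a) = G (i mod n) 1 * X (i + l) m a"
proof (induction m arbitrary: l)
  case 0
  have "i mod n < n" "l mod n < n" using n_pos by auto
  then show ?case by (simp add: X0 G_comp mod_add_eq)
next
  case (Suc m)
  define i' where "i' = i mod n"
  define e where "e = G i' 1"
  have i': "i' < n" using n_pos i'_def by simp
  have F1: "G i' w = sm (p ^ i') (e * w)" using wG i' e_def by blast
  have F2: "G i' y * e = G i' y" for y using G_mul[OF i', of y 1] e_def by simp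
  have F3: "e * w * e = e * w"
  proof -
    have "sm (p ^ i') (e * w * e) = sm (p ^ i') (e * w)" using F2[of w] F1 by (simp add: sm_ml)
    then have "sm (q ^ i') (sm (p ^ i') (e * w * e)) = sm (q ^ i') (sm (p ^ i') (e * w))" by simp
    moreover have "q ^ i' * p ^ i' = 1" by (metis power_mult_distrib qp power_one)
    ultimately show ?thesis by (simp add: sm_sm)
  qed
  have IH1: "G i' (X l m a) = e * X (i + l) m a" using Suc.IH i'_def e_def by simp
  have IH2: "G i' (X (Suc l) m a) = e * X (Suc (i + l)) m a" using Suc.IH[of "Suc l"] i'_def e_def by simp
  have A: "G i' (w * X l m a) = sm (p ^ i') (e * w * X (i + l) m a)"
  proof -
    have "G i' (w * X l m a) = sm (p ^ i') (e * w) * (e * X (i + l) m a)"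
      using G_mul[OF i'] F1 IH1 by simp
    also have "\<dots> = sm (p ^ i') (e * w * e * X (i + l) m a)" by (simp add: sm_ml mult.assoc)
    finally show ?thesis using F3 by simp
  qed
  have B: "G i' (X (Suc l) m a * w) = sm (p ^ i') (e * X (Suc (i + l)) m a * w)"
  proof -
    have "G i' (X (Suc l) m a * w) = G i' (X (Suc l) m a) * sm (p ^ i') (e * w)"
      using G_mul[OF i'] F1 by simp
    also have "\<dots> = sm (p ^ i') ((G i' (X (Suc l) m a) * e) * w)" by (simp add: sm_mr mult.assoc)
    also have "\<dots> = sm (p ^ i') (G i' (X (Suc l) m a) * w)" using F2 by simp
    also have "\<dots> = sm (p ^ i') (e * X (Suc (i + l)) m a * w)" using IH2 by simp
    finally show ?thesis .
  qed
  have "G i' (X l (Suc m) a) = sm (p ^ l) (G i' (w * X l m a) - G i' (X (Suc l) m a * w))"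
    by (simp add: X_rec G_sm[OF i'] G_diff[OF i'])
  also have "\<dots> = sm (p ^ l) (sm (p ^ i') (e * w * X (i + l) m a) - sm (p ^ i') (e * X (Suc (i + l)) m a * w))"
    using A B by simp
  also have "\<dots> = e * X (i + l) (Suc m) a"
    using p_mod[of i] i'_def by (simp add: X_rec sm_diff_r sm_sm sm_mr mult.assoc power_add mult.commute right_diff_distrib)
  finally show ?case using i'_def e_def by simp
qed

lemma Gen:
  fixes Phi U F :: "nat \<Rightarrow> nat \<Rightarrow> 'a"
  assumes Phi_rec: "\<And>i j. Phi i (Suc j) = sm (p ^ i) (w * Phi i j - Phi (Suc i) j * w)"
    and U_rec: "\<And>i j. U i (Suc j) = sm (p ^ i) (w * U i j - U (Suc i) j * w)"
    and F_rec: "\<And>i j. F i (Suc j) = sm (p ^ i) (w * F i j - F (Suc i) j * w)"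
    and base: "\<And>i. Phi i 0 = U i 0 * F i 0"
  shows "Phi i j = (\<Sum>k\<le>j. sm (qbinom q j k) (U (i + k) (j - k) * F i k))"
proof (induction j arbitrary: i)
  case 0 show ?case by (simp add: base qbinom_0)
next
  case (Suc j)
  define A where "A k = U (i + k) (j - k)" for k
  define A' where "A' k = U (Suc (i + k)) (j - k)" for k
  define C where "C k = F i k" for k
  define C' where "C' k = F (Suc i) k" for k
  define t where "t k = sm (qbinom q (Suc j) k) (U (i + k) (Suc j - k) * F i k)" for k
  define g where "g k = sm (q ^ k * qbinom q j k) (U (i + k) (Suc j - k) * F i k)" for k
  define h where "h k = sm (qbinom q j k) (U (i + Suc k) (Suc j - Suc k) * F i (Suc k))" for k
  have s: "(\<Sum>k\<le>Suc j. t k) = (\<Sum>k\<le>j. g k + h k)"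
  proof (rule split_sum)
    show "t 0 = g 0" by (simp add: t_def g_def qbinom_0)
    show "g (Suc j) = 0" by (simp add: g_def qbinom_gt)
    fix k assume "k \<le> j"
    show "t (Suc k) = g (Suc k) + h k"
      by (simp add: t_def g_def h_def sm_addl add.commute)
  qed
  have each: "g k + h k = sm (p ^ i) (sm (qbinom q j k) (w * A k * C k - A' k * C' k * w))"
    if k: "k \<le> j" for k
  proof -
    have u: "U (i + k) (Suc j - k) = sm (p ^ (i + k)) (w * A k - A' k * w)"
      using k U_rec unfolding A_def A'_def by (simp add: Suc_diff_le)
    have u2: "U (i + Suc k) (Suc j - Suc k) = A' k" unfolding A'_def by simp
    have f: "F i (Suc k) = sm (p ^ i) (w * C k - C' k * w)" unfolding C_def C'_def by (rule F_rec)
    have sc: "q ^ k * qbinom q j k * p ^ (i + k) = p ^ i * qbinom q j k"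
    proof -
      have "q ^ k * p ^ k = 1" by (metis power_mult_distrib qp power_one)
      then show ?thesis by (simp add: power_add algebra_simps)
    qed
    have "g k = sm (q ^ k * qbinom q j k) (sm (p ^ (i + k)) (w * A k - A' k * w) * C k)"
      unfolding g_def u C_def ..
    also have "\<dots> = sm (p ^ i * qbinom q j k) (w * A k * C k - A' k * w * C k)"
      by (simp add: sm_ml sm_sm sc left_diff_distrib)
    finally have G1: "g k = sm (p ^ i * qbinom q j k) (w * A k * C k - A' k * w * C k)" .
    have "h k = sm (qbinom q j k) (A' k * sm (p ^ i) (w * C k - C' k * w))"
      unfolding h_def u2 f ..
    also have "\<dots> = sm (p ^ i * qbinom q j k) (A' k * w * C k - A' k * C' k * w)"
      by (simp add: sm_mr sm_sm right_diff_distrib mult.assoc mult.commute)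
    finally have H1: "h k = sm (p ^ i * qbinom q j k) (A' k * w * C k - A' k * C' k * w)" .
    show ?thesis unfolding G1 H1 by (simp add: sm_sm sm_addr[symmetric])
  qed
  have LHS: "Phi i (Suc j) = sm (p ^ i) (\<Sum>k\<le>j. sm (qbinom q j k) (w * A k * C k - A' k * C' k * w))"
  proof -
    have "Phi i (Suc j) = sm (p ^ i) (w * Phi i j - Phi (Suc i) j * w)" by (rule Phi_rec)
    also have "w * Phi i j = (\<Sum>k\<le>j. sm (qbinom q j k) (w * A k * C k))"
      unfolding Suc.IH[of i] A_def C_def by (simp add: sum_distrib_left sm_mr mult.assoc)
    also have "Phi (Suc i) j * w = (\<Sum>k\<le>j. sm (qbinom q j k) (A' k * C' k * w))"
      unfolding Suc.IH[of "Suc i"] A'_def C'_def by (simp add: sum_distrib_right sm_ml)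
    finally show ?thesis by (simp add: sum_subtractf sm_diff_r)
  qed
  have "(\<Sum>k\<le>Suc j. t k) = (\<Sum>k\<le>j. sm (p ^ i) (sm (qbinom q j k) (w * A k * C k - A' k * C' k * w)))"
    unfolding s by (rule sum.cong) (auto simp: each)
  also have "\<dots> = Phi i (Suc j)" unfolding LHS by (simp add: sm_sum_r)
  finally show ?case unfolding t_def by simp
qed

end



context tctx begin

lemma sum_swap3: "(\<Sum>a\<in>A. \<Sum>b\<in>B. \<Sum>k\<in>K. f a b k) = (\<Sum>k\<in>K. \<Sum>a\<in>A. \<Sum>b\<in>B. f a b k)"
proof -
  have "(\<Sum>a\<in>A. \<Sum>b\<in>B. \<Sum>k\<in>K. f a b k) = (\<Sum>a\<in>A. \<Sum>k\<in>K. \<Sum>b\<in>B. f a b k)"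
    by (rule sum.cong[OF refl], rule sum.swap)
  also have "\<dots> = (\<Sum>k\<in>K. \<Sum>a\<in>A. \<Sum>b\<in>B. f a b k)" by (rule sum.swap)
  finally show ?thesis .
qed

lemma if_mult0: "(if c then (x::'k) else 0) * y = (if c then x * y else 0)" by simp

abbreviation TB where "TB \<equiv> taft_basis n"

lemma TB_fin: "finite TB" by (simp add: taft_basis_def)
lemma TB_mem: "(x, y) \<in> TB \<longleftrightarrow> x < n \<and> y < n" by (simp add: taft_basis_def)

lemma sm_if0: "sm (if P then s else 0) x = (if P then sm s x else 0)" by simp

lemma comult_explicit:
  assumes "i < n" "j < n"
  shows "taft_comult_aux n q i j e1 e2 =
    (\<Sum>k\<le>j. if e1 = ((i + k) mod n, j - k) \<and> e2 = (i, k) then qbinom q j k else 0)"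
  using assms(2)
proof (induction j arbitrary: e1 e2)
  case 0 then show ?case using assms(1) unfolding atMost_0 by simp
next
  case (Suc j)
  have jn: "j < n" using Suc.prems by simp
  define Mq where "Mq b1 b2 = taft_mult n q b1 (0, 1) e1 * taft_mult n q b2 (0, 0) e2
         + taft_mult n q b1 (1 mod n, 0) e1 * taft_mult n q b2 (0, 1) e2" for b1 b2
  define c1 where "c1 k = (e1 = ((i + k) mod n, Suc j - k) \<and> e2 = (i, k))" for k
  define c2 where "c2 k = (e1 = ((i + Suc k) mod n, j - k) \<and> e2 = (i, Suc k))" for k
  have "taft_comult_aux n q i (Suc j) e1 e2 = (\<Sum>b1\<in>TB. \<Sum>b2\<in>TB. taft_comult_aux n q i j b1 b2 * Mq b1 b2)"
    unfolding Mq_def by simp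
  also have "\<dots> = (\<Sum>b1\<in>TB. \<Sum>b2\<in>TB. \<Sum>k\<le>j.
       if b1 = ((i + k) mod n, j - k) \<and> b2 = (i, k) then qbinom q j k * Mq b1 b2 else 0)"
    unfolding Suc.IH[OF jn] by (simp add: sum_distrib_right if_mult0)
  also have "\<dots> = (\<Sum>k\<le>j. \<Sum>b1\<in>TB. \<Sum>b2\<in>TB.
       if b1 = ((i + k) mod n, j - k) \<and> b2 = (i, k) then qbinom q j k * Mq b1 b2 else 0)"
    by (rule sum_swap3)
  also have "\<dots> = (\<Sum>k\<le>j. qbinom q j k * Mq ((i + k) mod n, j - k) (i, k))"
  proof (rule sum.cong)
    fix k assume "k \<in> {..j}"
    then have "((i + k) mod n, j - k) \<in> TB" "(i, k) \<in> TB" using jn n_pos assms(1) by (auto simp: TB_mem)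
    then show "(\<Sum>b1\<in>TB. \<Sum>b2\<in>TB.
       if b1 = ((i + k) mod n, j - k) \<and> b2 = (i, k) then qbinom q j k * Mq b1 b2 else 0)
      = qbinom q j k * Mq ((i + k) mod n, j - k) (i, k)"
      by (rule sum2_delta[OF TB_fin TB_fin])
  qed simp
  also have "\<dots> = (\<Sum>k\<le>j. (if c1 k then qbinom q j k else 0) + (if c2 k then q ^ (j - k) * qbinom q j k else 0))"
  proof (rule sum.cong)
    fix k assume k: "k \<in> {..j}"
    have m1: "((i + k) mod n + 1) mod n = (i + Suc k) mod n" "Suc ((i + k) mod n) mod n = Suc (i + k) mod n"
      by (simp_all add: mod_Suc_eq)
    have tm1: "taft_mult n q ((i + k) mod n, j - k) (0, 1) e1 = (if e1 = ((i + k) mod n, Suc (j - k)) then 1 else 0)"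
      unfolding taft_mult_def by simp
    have tm2: "taft_mult n q (i, k) (0, 0) e2 = (if e2 = (i, k) then 1 else 0)"
      unfolding taft_mult_def using assms(1) by simp
    have tm3: "taft_mult n q ((i + k) mod n, j - k) (1 mod n, 0) e1 = (if e1 = ((i + Suc k) mod n, j - k) then q ^ (j - k) else 0)"
      unfolding taft_mult_def one_mod by (simp only: m1 fst_conv snd_conv add_0_right mult_1_right)
    have tm4: "taft_mult n q (i, k) (0, 1) e2 = (if e2 = (i, Suc k) then 1 else 0)"
      unfolding taft_mult_def using assms(1) by simp
    have sj: "Suc j - k = Suc (j - k)" using k by simp
    have "Mq ((i + k) mod n, j - k) (i, k) = (if c1 k then 1 else 0) + (if c2 k then q ^ (j - k) else 0)"
      unfolding Mq_def tm1 tm2 tm3 tm4 c1_def c2_def sj by simp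
    then show "qbinom q j k * Mq ((i + k) mod n, j - k) (i, k) =
      (if c1 k then qbinom q j k else 0) + (if c2 k then q ^ (j - k) * qbinom q j k else 0)"
      by (simp add: distrib_left mult.commute)
  qed simp
  also have "\<dots> = (\<Sum>k\<le>Suc j. if c1 k then qbinom q (Suc j) k else 0)"
  proof (rule split_sum[symmetric])
    show "(if c1 0 then qbinom q (Suc j) 0 else 0) = (if c1 0 then qbinom q j 0 else 0)"
      by (simp add: qbinom_0)
    show "(if c1 (Suc j) then qbinom q j (Suc j) else 0) = 0" by (simp add: qbinom_gt)
    fix k assume "k \<le> j"
    have "c2 k = c1 (Suc k)" unfolding c1_def c2_def by simp
    then show "(if c1 (Suc k) then qbinom q (Suc j) (Suc k) else 0) =
      (if c1 (Suc k) then qbinom q j (Suc k) else 0) + (if c2 k then q ^ (j - k) * qbinom q j k else 0)"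
      by (subst qbinom_pascal2) (simp add: add.commute)
  qed
  finally show ?case unfolding c1_def .
qed

lemma comult_sum:
  assumes "i < n" "j < n"
  shows "(\<Sum>b1\<in>TB. \<Sum>b2\<in>TB. sm (taft_comult n q (i, j) b1 b2) (Psi b1 b2)) =
     (\<Sum>k\<le>j. sm (qbinom q j k) (Psi ((i + k) mod n, j - k) (i, k)))"
proof -
  have "(\<Sum>b1\<in>TB. \<Sum>b2\<in>TB. sm (taft_comult n q (i, j) b1 b2) (Psi b1 b2)) =
     (\<Sum>b1\<in>TB. \<Sum>b2\<in>TB. \<Sum>k\<le>j. if b1 = ((i + k) mod n, j - k) \<and> b2 = (i, k) then sm (qbinom q j k) (Psi b1 b2) else 0)"
    unfolding taft_comult_def using assms
    by (simp add: comult_explicit sm_sum_l sm_if0 cong: if_cong)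
  also have "\<dots> = (\<Sum>k\<le>j. \<Sum>b1\<in>TB. \<Sum>b2\<in>TB. if b1 = ((i + k) mod n, j - k) \<and> b2 = (i, k) then sm (qbinom q j k) (Psi b1 b2) else 0)"
    by (rule sum_swap3)
  also have "\<dots> = (\<Sum>k\<le>j. sm (qbinom q j k) (Psi ((i + k) mod n, j - k) (i, k)))"
  proof (rule sum.cong)
    fix k assume "k \<in> {..j}"
    then have "((i + k) mod n, j - k) \<in> TB" "(i, k) \<in> TB" using assms n_pos by (auto simp: TB_mem)
    then show "(\<Sum>b1\<in>TB. \<Sum>b2\<in>TB. if b1 = ((i + k) mod n, j - k) \<and> b2 = (i, k) then sm (qbinom q j k) (Psi b1 b2) else 0)
      = sm (qbinom q j k) (Psi ((i + k) mod n, j - k) (i, k))"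
      by (rule sum2_delta[OF TB_fin TB_fin])
  qed simp
  finally show ?thesis .
qed

end



context tctx begin

lemma act_X: "taft_act n q sm G w b a = X (fst b) (snd b) a"
  by (cases b) (simp add: X_def)

lemma mult_sum:
  assumes "i < n" "l < n"
  shows "(\<Sum>e\<in>TB. sm (taft_mult n q (i, r) (l, m) e) (X (fst e) (snd e) a)) = sm (q ^ (r * l)) (X (i + l) (r + m) a)"
proof -
  have "(\<Sum>e\<in>TB. sm (taft_mult n q (i, r) (l, m) e) (X (fst e) (snd e) a))
      = (\<Sum>e\<in>TB. if e = ((i + l) mod n, r + m) then sm (q ^ (r * l)) (X (fst e) (snd e) a) else 0)"
    unfolding taft_mult_def by (simp add: sm_if0 cong: if_cong)
  also have "\<dots> = (if ((i + l) mod n, r + m) \<in> TB then sm (q ^ (r * l)) (X ((i + l) mod n) (r + m) a) else 0)"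
    using TB_fin by (simp add: sum.delta')
  also have "\<dots> = sm (q ^ (r * l)) (X (i + l) (r + m) a)"
    using n_pos by (auto simp: TB_mem X_mod X_big)
  finally show ?thesis .
qed

lemma main: "partial_action (taft_basis n) (taft_mult n q) taft_unit (taft_comult n q) sm
           (taft_act n q sm G w)"
  unfolding partial_action_def act_X
proof (intro conjI ballI allI)
  fix b :: "nat \<times> nat" and a c
  show "X (fst b) (snd b) (a + c) = X (fst b) (snd b) a + X (fst b) (snd b) c" by (rule X_add)
next
  fix b :: "nat \<times> nat" and t a
  show "X (fst b) (snd b) (sm t a) = sm t (X (fst b) (snd b) a)" by (rule X_sm)
next
  fix a
  have "(\<Sum>e\<in>TB. sm (taft_unit e) (X (fst e) (snd e) a)) = (\<Sum>e\<in>TB. if e = (0, 0) then X (fst e) (snd e) a else 0)"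
    unfolding taft_unit_def by simp
  also have "\<dots> = X 0 0 a" using TB_fin n_pos by (simp add: sum.delta' TB_mem)
  also have "\<dots> = a" by (simp add: X0 G0)
  finally show "(\<Sum>e\<in>TB. sm (taft_unit e) (X (fst e) (snd e) a)) = a" .
next
  fix b :: "nat \<times> nat" and a c
  assume b: "b \<in> TB"
  obtain i j where ij: "b = (i, j)" by (cases b)
  have i: "i < n" and j: "j < n" using b ij by (auto simp: TB_mem)
  have "(\<Sum>b1\<in>TB. \<Sum>b2\<in>TB. sm (taft_comult n q b b1 b2) (X (fst b1) (snd b1) a * X (fst b2) (snd b2) c))
      = (\<Sum>k\<le>j. sm (qbinom q j k) (X ((i + k) mod n) (j - k) a * X i k c))"
    unfolding ij using comult_sum[OF i j, of "\<lambda>b1 b2. X (fst b1) (snd b1) a * X (fst b2) (snd b2) c"] by simp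
  also have "\<dots> = (\<Sum>k\<le>j. sm (qbinom q j k) (X (i + k) (j - k) a * X i k c))"
    by (simp add: X_mod)
  also have "\<dots> = X i j (a * c)"
    by (rule Gen[where Phi = "\<lambda>i j. X i j (a * c)" and U = "\<lambda>i j. X i j a" and F = "\<lambda>i j. X i j c", symmetric])
       (auto simp: X_rec X0 G_mul n_pos)
  finally show "X (fst b) (snd b) (a * c) =
    (\<Sum>b1\<in>TB. \<Sum>b2\<in>TB. sm (taft_comult n q b b1 b2) (X (fst b1) (snd b1) a * X (fst b2) (snd b2) c))"
    using ij by simp
next
  fix b k :: "nat \<times> nat" and a
  assume b: "b \<in> TB" and k: "k \<in> TB"
  obtain i j where ij: "b = (i, j)" by (cases b)
  obtain l m where lm: "k = (l, m)" by (cases k)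
  have i: "i < n" and j: "j < n" using b ij by (auto simp: TB_mem)
  have l: "l < n" and m: "m < n" using k lm by (auto simp: TB_mem)
  define F where "F i r = sm (q ^ (r * l)) (X (i + l) (r + m) a)" for i r
  have "(\<Sum>b1\<in>TB. \<Sum>b2\<in>TB. sm (taft_comult n q b b1 b2)
            (X (fst b1) (snd b1) 1 * (\<Sum>e\<in>TB. sm (taft_mult n q b2 k e) (X (fst e) (snd e) a))))
      = (\<Sum>r\<le>j. sm (qbinom q j r) (X ((i + r) mod n) (j - r) 1 *
            (\<Sum>e\<in>TB. sm (taft_mult n q (i, r) (l, m) e) (X (fst e) (snd e) a))))"
    unfolding ij lm using comult_sum[OF i j, of "\<lambda>b1 b2. X (fst b1) (snd b1) 1 * (\<Sum>e\<in>TB. sm (taft_mult n q b2 (l, m) e) (X (fst e) (snd e) a))"]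
    by simp
  also have "\<dots> = (\<Sum>r\<le>j. sm (qbinom q j r) (X (i + r) (j - r) 1 * F i r))"
    by (simp add: X_mod mult_sum[OF i l] F_def)
  also have "\<dots> = X i j (X l m a)"
  proof (rule Gen[where Phi = "\<lambda>i j. X i j (X l m a)" and U = "\<lambda>i j. X i j 1" and F = F, symmetric])
    show "\<And>i j. X i (Suc j) (X l m a) = sm (p ^ i) (w * X i j (X l m a) - X (Suc i) j (X l m a) * w)"
      by (rule X_rec)
    show "\<And>i j. X i (Suc j) 1 = sm (p ^ i) (w * X i j 1 - X (Suc i) j 1 * w)"
      by (rule X_rec)
    show "\<And>i. X i 0 (X l m a) = X i 0 1 * F i 0"
      by (simp add: X0 F_def G_X)
    fix i' r
    have sc: "p ^ (i' + l) * q ^ (l + l * r) = p ^ i' * q ^ (l * r)"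
    proof -
      have "q ^ l * p ^ l = 1" by (metis power_mult_distrib qp power_one)
      then show ?thesis by (simp add: power_add algebra_simps)
    qed
    show "F i' (Suc r) = sm (p ^ i') (w * F i' r - F (Suc i') r * w)"
      unfolding F_def
      by (simp add: X_rec sm_sm sm_mr sm_ml sm_diff_r sc mult.commute)
  qed
  finally show "X (fst b) (snd b) (X (fst k) (snd k) a) =
    (\<Sum>b1\<in>TB. \<Sum>b2\<in>TB. sm (taft_comult n q b b1 b2)
            (X (fst b1) (snd b1) 1 * (\<Sum>e\<in>TB. sm (taft_mult n q b2 k e) (X (fst e) (snd e) a))))"
    using ij lm by simp
qed

end



theorem proposition3p7:
  fixes n :: nat and q :: "'k::field" and sm :: "'k \<Rightarrow> 'a::ring_1 \<Rightarrow> 'a"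
    and G :: "nat \<Rightarrow> 'a \<Rightarrow> 'a" and w :: 'a
  assumes "n \<ge> 2"
    and "primitive_root n q"
    and "kalgebra sm"
    and "partial_action (cyc_basis n) (cyc_mult n) cyc_unit cyc_comult sm G"
    and "G 1 1 = 0"
    and "\<forall>a. w ^ n * a = a * w ^ n"
    and "\<forall>i < n. G i w = sm (inverse q ^ i) (G i 1 * w)"
  shows "partial_action (taft_basis n) (taft_mult n q) taft_unit (taft_comult n q) sm
           (taft_act n q sm G w)"
proof -
  interpret tctx n q sm G w
    using assms(1-4,6,7) by (rule tctx.intro)
  show ?thesis by (rule main)
qed

end
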